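(* Let $\mathcal A$ be an abelian category with enough projective objects and $\mathcal C$ a resolving subcategory of $\mathcal A$. Let $G=(G^i,d^i_G)$ be an upper bounded acyclic complex with all $G^i\in\mathcal C$, and let $I=(I^i,d^i_I)$ be a bounded complex all of whose terms $I^i$ are injective objects of $\mathcal C$. Then $\operatorname{Hom}_{K^-(\mathcal A)}(G,I)=0$.
   Context: $\mathcal C$ is resolving if it contains all projective objects and is closed under extensions, direct summands and kernels of epimorphisms. An object $I\in\mathcal C$ is an injective object of $\mathcal C$ if $\operatorname{Ext}^1_{\mathcal A}(X,I)=0$ for all $X\in\mathcal C$. $K^-(\mathcal A)$ is the homotopy category of upper bounded complexes over $\mathcal A$. *)

theory Defs
  imports Main
begin

text \<open>An (abstract) preadditive category presented by a set of objects, hom-sets,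
  composition (cmp g f means g after f), identities, addition of parallel morphisms,
  zero morphisms and negation.\<close>

record ('o, 'm) cat =
  Ob  :: "'o set"
  Hom :: "'o \<Rightarrow> 'o \<Rightarrow> 'm set"
  cmp :: "'m \<Rightarrow> 'm \<Rightarrow> 'm"
  idm :: "'o \<Rightarrow> 'm"
  add :: "'m \<Rightarrow> 'm \<Rightarrow> 'm"
  zro :: "'o \<Rightarrow> 'o \<Rightarrow> 'm"
  ngt :: "'m \<Rightarrow> 'm"

definition is_category :: "('o, 'm, 'x) cat_scheme \<Rightarrow> bool" where
  "is_category C \<longleftrightarrow>
     (\<forall>A\<in>Ob C. \<forall>B\<in>Ob C. \<forall>D\<in>Ob C. \<forall>f\<in>Hom C A B. \<forall>g\<in>Hom C B D.
        cmp C g f \<in> Hom C A D) \<and>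
     (\<forall>A\<in>Ob C. \<forall>B\<in>Ob C. \<forall>D\<in>Ob C. \<forall>E\<in>Ob C.
        \<forall>f\<in>Hom C A B. \<forall>g\<in>Hom C B D. \<forall>h\<in>Hom C D E.
        cmp C h (cmp C g f) = cmp C (cmp C h g) f) \<and>
     (\<forall>A\<in>Ob C. idm C A \<in> Hom C A A) \<and>
     (\<forall>A\<in>Ob C. \<forall>B\<in>Ob C. \<forall>f\<in>Hom C A B.
        cmp C (idm C B) f = f \<and> cmp C f (idm C A) = f)"

definition is_preadditive :: "('o, 'm, 'x) cat_scheme \<Rightarrow> bool" where
  "is_preadditive C \<longleftrightarrow> is_category C \<and>
     (\<forall>A\<in>Ob C. \<forall>B\<in>Ob C.
        zro C A B \<in> Hom C A B \<and>
        (\<forall>f\<in>Hom C A B. \<forall>g\<in>Hom C A B. add C f g \<in> Hom C A B) \<and>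
        (\<forall>f\<in>Hom C A B. ngt C f \<in> Hom C A B) \<and>
        (\<forall>f\<in>Hom C A B. \<forall>g\<in>Hom C A B. \<forall>h\<in>Hom C A B.
           add C (add C f g) h = add C f (add C g h)) \<and>
        (\<forall>f\<in>Hom C A B. \<forall>g\<in>Hom C A B. add C f g = add C g f) \<and>
        (\<forall>f\<in>Hom C A B. add C f (zro C A B) = f) \<and>
        (\<forall>f\<in>Hom C A B. add C f (ngt C f) = zro C A B)) \<and>
     (\<forall>A\<in>Ob C. \<forall>B\<in>Ob C. \<forall>D\<in>Ob C.
        (\<forall>f\<in>Hom C A B. \<forall>g\<in>Hom C A B. \<forall>h\<in>Hom C B D.
           cmp C h (add C f g) = add C (cmp C h f) (cmp C h g)) \<and>
        (\<forall>f\<in>Hom C A B. \<forall>g\<in>Hom C B D. \<forall>h\<in>Hom C B D.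
           cmp C (add C g h) f = add C (cmp C g f) (cmp C h f)))"

definition is_zero_obj :: "('o, 'm, 'x) cat_scheme \<Rightarrow> 'o \<Rightarrow> bool" where
  "is_zero_obj C Z \<longleftrightarrow> Z \<in> Ob C \<and>
     (\<forall>A\<in>Ob C. (\<exists>!f. f \<in> Hom C A Z) \<and> (\<exists>!f. f \<in> Hom C Z A))"

definition is_biproduct ::
  "('o, 'm, 'x) cat_scheme \<Rightarrow> 'o \<Rightarrow> 'o \<Rightarrow> 'o \<Rightarrow> 'm \<Rightarrow> 'm \<Rightarrow> 'm \<Rightarrow> 'm \<Rightarrow> bool" where
  "is_biproduct C A B S i1 i2 p1 p2 \<longleftrightarrow> S \<in> Ob C \<and>
     i1 \<in> Hom C A S \<and> i2 \<in> Hom C B S \<and> p1 \<in> Hom C S A \<and> p2 \<in> Hom C S B \<and>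
     cmp C p1 i1 = idm C A \<and> cmp C p2 i2 = idm C B \<and>
     cmp C p1 i2 = zro C B A \<and> cmp C p2 i1 = zro C A B \<and>
     add C (cmp C i1 p1) (cmp C i2 p2) = idm C S"

definition is_mono :: "('o, 'm, 'x) cat_scheme \<Rightarrow> 'o \<Rightarrow> 'o \<Rightarrow> 'm \<Rightarrow> bool" where
  "is_mono C A B m \<longleftrightarrow> m \<in> Hom C A B \<and>
     (\<forall>X\<in>Ob C. \<forall>g\<in>Hom C X A. \<forall>h\<in>Hom C X A. cmp C m g = cmp C m h \<longrightarrow> g = h)"

definition is_epi :: "('o, 'm, 'x) cat_scheme \<Rightarrow> 'o \<Rightarrow> 'o \<Rightarrow> 'm \<Rightarrow> bool" where
  "is_epi C A B e \<longleftrightarrow> e \<in> Hom C A B \<and>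
     (\<forall>X\<in>Ob C. \<forall>g\<in>Hom C B X. \<forall>h\<in>Hom C B X. cmp C g e = cmp C h e \<longrightarrow> g = h)"

definition is_kernel ::
  "('o, 'm, 'x) cat_scheme \<Rightarrow> 'o \<Rightarrow> 'o \<Rightarrow> 'm \<Rightarrow> 'o \<Rightarrow> 'm \<Rightarrow> bool" where
  "is_kernel C A B f K k \<longleftrightarrow> f \<in> Hom C A B \<and> K \<in> Ob C \<and> k \<in> Hom C K A \<and>
     cmp C f k = zro C K B \<and>
     (\<forall>X\<in>Ob C. \<forall>h\<in>Hom C X A. cmp C f h = zro C X B \<longrightarrow>
        (\<exists>!u. u \<in> Hom C X K \<and> cmp C k u = h))"

definition is_cokernel ::
  "('o, 'm, 'x) cat_scheme \<Rightarrow> 'o \<Rightarrow> 'o \<Rightarrow> 'm \<Rightarrow> 'o \<Rightarrow> 'm \<Rightarrow> bool" where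
  "is_cokernel C A B f Q q \<longleftrightarrow> f \<in> Hom C A B \<and> Q \<in> Ob C \<and> q \<in> Hom C B Q \<and>
     cmp C q f = zro C A Q \<and>
     (\<forall>Y\<in>Ob C. \<forall>h\<in>Hom C B Y. cmp C h f = zro C A Y \<longrightarrow>
        (\<exists>!u. u \<in> Hom C Q Y \<and> cmp C u q = h))"

definition is_abelian :: "('o, 'm, 'x) cat_scheme \<Rightarrow> bool" where
  "is_abelian C \<longleftrightarrow> is_preadditive C \<and>
     (\<exists>Z. is_zero_obj C Z) \<and>
     (\<forall>A\<in>Ob C. \<forall>B\<in>Ob C. \<exists>S i1 i2 p1 p2. is_biproduct C A B S i1 i2 p1 p2) \<and>
     (\<forall>A\<in>Ob C. \<forall>B\<in>Ob C. \<forall>f\<in>Hom C A B.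
        (\<exists>K k. is_kernel C A B f K k) \<and> (\<exists>Q q. is_cokernel C A B f Q q)) \<and>
     (\<forall>A\<in>Ob C. \<forall>B\<in>Ob C. \<forall>m. is_mono C A B m \<longrightarrow>
        (\<exists>D\<in>Ob C. \<exists>g\<in>Hom C B D. is_kernel C B D g A m)) \<and>
     (\<forall>A\<in>Ob C. \<forall>B\<in>Ob C. \<forall>e. is_epi C A B e \<longrightarrow>
        (\<exists>D\<in>Ob C. \<exists>g\<in>Hom C D A. is_cokernel C D A g B e))"

definition is_exact ::
  "('o, 'm, 'x) cat_scheme \<Rightarrow> 'o \<Rightarrow> 'o \<Rightarrow> 'o \<Rightarrow> 'm \<Rightarrow> 'm \<Rightarrow> bool" where
  "is_exact C A B D f g \<longleftrightarrow> f \<in> Hom C A B \<and> g \<in> Hom C B D \<and>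
     cmp C g f = zro C A D \<and>
     (\<forall>K k Q q. is_kernel C B D g K k \<and> is_cokernel C A B f Q q \<longrightarrow>
        cmp C q k = zro C K Q)"

definition short_exact ::
  "('o, 'm, 'x) cat_scheme \<Rightarrow> 'o \<Rightarrow> 'o \<Rightarrow> 'o \<Rightarrow> 'm \<Rightarrow> 'm \<Rightarrow> bool" where
  "short_exact C A B D f g \<longleftrightarrow> A \<in> Ob C \<and> B \<in> Ob C \<and> D \<in> Ob C \<and>
     is_mono C A B f \<and> is_epi C B D g \<and> is_exact C A B D f g"

definition is_projective :: "('o, 'm, 'x) cat_scheme \<Rightarrow> 'o \<Rightarrow> bool" where
  "is_projective C P \<longleftrightarrow> P \<in> Ob C \<and>
     (\<forall>X\<in>Ob C. \<forall>Y\<in>Ob C. \<forall>e h. is_epi C X Y e \<and> h \<in> Hom C P Y \<longrightarrow>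
        (\<exists>h'\<in>Hom C P X. cmp C e h' = h))"

definition enough_projectives :: "('o, 'm, 'x) cat_scheme \<Rightarrow> bool" where
  "enough_projectives C \<longleftrightarrow>
     (\<forall>X\<in>Ob C. \<exists>P e. is_projective C P \<and> is_epi C P X e)"

text \<open>Resolving (full) subcategory, given by its class of objects S.\<close>
definition resolving :: "('o, 'm, 'x) cat_scheme \<Rightarrow> 'o set \<Rightarrow> bool" where
  "resolving C S \<longleftrightarrow> S \<subseteq> Ob C \<and>
     (\<forall>P. is_projective C P \<longrightarrow> P \<in> S) \<and>
     (\<forall>A B D f g. short_exact C A B D f g \<and> A \<in> S \<and> D \<in> S \<longrightarrow> B \<in> S) \<and>
     (\<forall>A A' B i1 i2 p1 p2. is_biproduct C A A' B i1 i2 p1 p2 \<and> A \<in> Ob C \<and> A' \<in> Ob C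
        \<and> B \<in> S \<longrightarrow> A \<in> S) \<and>
     (\<forall>A B D f g. short_exact C A B D f g \<and> B \<in> S \<and> D \<in> S \<longrightarrow> A \<in> S)"

text \<open>Ext^1(X, I) = 0 (Yoneda Ext): every extension 0 \<rightarrow> I \<rightarrow> E \<rightarrow> X \<rightarrow> 0 splits.\<close>
definition ext1_zero :: "('o, 'm, 'x) cat_scheme \<Rightarrow> 'o \<Rightarrow> 'o \<Rightarrow> bool" where
  "ext1_zero C X I \<longleftrightarrow>
     (\<forall>E f g. short_exact C I E X f g \<longrightarrow> (\<exists>r\<in>Hom C E I. cmp C r f = idm C I))"

definition injective_in :: "('o, 'm, 'x) cat_scheme \<Rightarrow> 'o set \<Rightarrow> 'o \<Rightarrow> bool" where
  "injective_in C S I \<longleftrightarrow> I \<in> S \<and> (\<forall>X\<in>S. ext1_zero C X I)"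

definition is_complex :: "('o, 'm, 'x) cat_scheme \<Rightarrow> (int \<Rightarrow> 'o) \<Rightarrow> (int \<Rightarrow> 'm) \<Rightarrow> bool" where
  "is_complex C X d \<longleftrightarrow>
     (\<forall>i. X i \<in> Ob C \<and> d i \<in> Hom C (X i) (X (i + 1)) \<and>
          cmp C (d (i + 1)) (d i) = zro C (X i) (X (i + 2)))"

definition upper_bounded :: "('o, 'm, 'x) cat_scheme \<Rightarrow> (int \<Rightarrow> 'o) \<Rightarrow> bool" where
  "upper_bounded C X \<longleftrightarrow> (\<exists>n. \<forall>i\<ge>n. is_zero_obj C (X i))"

definition bounded_cx :: "('o, 'm, 'x) cat_scheme \<Rightarrow> (int \<Rightarrow> 'o) \<Rightarrow> bool" where
  "bounded_cx C X \<longleftrightarrow> (\<exists>m n. \<forall>i. (i \<le> m \<or> i \<ge> n) \<longrightarrow> is_zero_obj C (X i))"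

definition acyclic_cx :: "('o, 'm, 'x) cat_scheme \<Rightarrow> (int \<Rightarrow> 'o) \<Rightarrow> (int \<Rightarrow> 'm) \<Rightarrow> bool" where
  "acyclic_cx C X d \<longleftrightarrow>
     (\<forall>i. is_exact C (X (i - 1)) (X i) (X (i + 1)) (d (i - 1)) (d i))"

definition chain_map ::
  "('o, 'm, 'x) cat_scheme \<Rightarrow> (int \<Rightarrow> 'o) \<Rightarrow> (int \<Rightarrow> 'm) \<Rightarrow> (int \<Rightarrow> 'o) \<Rightarrow> (int \<Rightarrow> 'm)
   \<Rightarrow> (int \<Rightarrow> 'm) \<Rightarrow> bool" where
  "chain_map C X dX Y dY f \<longleftrightarrow>
     (\<forall>i. f i \<in> Hom C (X i) (Y i) \<and> cmp C (dY i) (f i) = cmp C (f (i + 1)) (dX i))"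

definition null_homotopic ::
  "('o, 'm, 'x) cat_scheme \<Rightarrow> (int \<Rightarrow> 'o) \<Rightarrow> (int \<Rightarrow> 'm) \<Rightarrow> (int \<Rightarrow> 'o) \<Rightarrow> (int \<Rightarrow> 'm)
   \<Rightarrow> (int \<Rightarrow> 'm) \<Rightarrow> bool" where
  "null_homotopic C X dX Y dY f \<longleftrightarrow>
     (\<exists>s. \<forall>i. s i \<in> Hom C (X i) (Y (i - 1)) \<and>
        f i = add C (cmp C (dY (i - 1)) (s i)) (cmp C (s (i + 1)) (dX i)))"

text \<open>Hom_{K(A)}((X,dX),(Y,dY)) = 0: every chain map is null-homotopic.
  (K^-(A) is a full subcategory of K(A).)\<close>
definition homK_zero ::
  "('o, 'm, 'x) cat_scheme \<Rightarrow> (int \<Rightarrow> 'o) \<Rightarrow> (int \<Rightarrow> 'm) \<Rightarrow> (int \<Rightarrow> 'o) \<Rightarrow> (int \<Rightarrow> 'm) \<Rightarrow> bool" where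
  "homK_zero C X dX Y dY \<longleftrightarrow>
     (\<forall>f. chain_map C X dX Y dY f \<longrightarrow> null_homotopic C X dX Y dY f)"

end

theory Submission
  imports Defs
begin


locale abcat =
  fixes C :: "('o, 'm, 'x) cat_scheme"
  assumes abel: "is_abelian C"
begin

abbreviation cc (infixr "\<cdot>" 70) where "g \<cdot> f \<equiv> cmp C g f"
abbreviation pl (infixl "\<oplus>" 65) where "f \<oplus> g \<equiv> add C f g"
abbreviation ng ("\<ominus> _" [81] 80) where "\<ominus> f \<equiv> ngt C f"
abbreviation zz where "zz A B \<equiv> zro C A B"
abbreviation H where "H A B \<equiv> Hom C A B"

lemma pre: "is_preadditive C" using abel unfolding is_abelian_def by auto
lemma cat: "is_category C" using pre unfolding is_preadditive_def by auto

lemma comp_in: "A \<in> Ob C \<Longrightarrow> B \<in> Ob C \<Longrightarrow> D \<in> Ob C \<Longrightarrow> f \<in> H A B \<Longrightarrow> g \<in> H B D \<Longrightarrow> g \<cdot> f \<in> H A D"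
  using cat unfolding is_category_def by blast
lemma assoc: "A \<in> Ob C \<Longrightarrow> B \<in> Ob C \<Longrightarrow> D \<in> Ob C \<Longrightarrow> E \<in> Ob C \<Longrightarrow> f \<in> H A B \<Longrightarrow> g \<in> H B D \<Longrightarrow> h \<in> H D E
  \<Longrightarrow> h \<cdot> (g \<cdot> f) = (h \<cdot> g) \<cdot> f"
  using cat unfolding is_category_def by blast
lemma id_in: "A \<in> Ob C \<Longrightarrow> idm C A \<in> H A A"
  using cat unfolding is_category_def by blast
lemma id_l: "A \<in> Ob C \<Longrightarrow> B \<in> Ob C \<Longrightarrow> f \<in> H A B \<Longrightarrow> idm C B \<cdot> f = f"
  using cat unfolding is_category_def by blast
lemma id_r: "A \<in> Ob C \<Longrightarrow> B \<in> Ob C \<Longrightarrow> f \<in> H A B \<Longrightarrow> f \<cdot> idm C A = f"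
  using cat unfolding is_category_def by blast

lemma zro_in: "A \<in> Ob C \<Longrightarrow> B \<in> Ob C \<Longrightarrow> zz A B \<in> H A B"
  using pre unfolding is_preadditive_def by blast
lemma add_in: "A \<in> Ob C \<Longrightarrow> B \<in> Ob C \<Longrightarrow> f \<in> H A B \<Longrightarrow> g \<in> H A B \<Longrightarrow> f \<oplus> g \<in> H A B"
  using pre unfolding is_preadditive_def by blast
lemma ngt_in: "A \<in> Ob C \<Longrightarrow> B \<in> Ob C \<Longrightarrow> f \<in> H A B \<Longrightarrow> \<ominus> f \<in> H A B"
  using pre unfolding is_preadditive_def by blast
lemma add_assoc: "A \<in> Ob C \<Longrightarrow> B \<in> Ob C \<Longrightarrow> f \<in> H A B \<Longrightarrow> g \<in> H A B \<Longrightarrow> h \<in> H A B \<Longrightarrow> (f \<oplus> g) \<oplus> h = f \<oplus> (g \<oplus> h)"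
  using pre unfolding is_preadditive_def by blast
lemma add_comm: "A \<in> Ob C \<Longrightarrow> B \<in> Ob C \<Longrightarrow> f \<in> H A B \<Longrightarrow> g \<in> H A B \<Longrightarrow> f \<oplus> g = g \<oplus> f"
  using pre unfolding is_preadditive_def by blast
lemma add_zro: "A \<in> Ob C \<Longrightarrow> B \<in> Ob C \<Longrightarrow> f \<in> H A B \<Longrightarrow> f \<oplus> zz A B = f"
  using pre unfolding is_preadditive_def by blast
lemma add_ngt: "A \<in> Ob C \<Longrightarrow> B \<in> Ob C \<Longrightarrow> f \<in> H A B \<Longrightarrow> f \<oplus> (\<ominus> f) = zz A B"
  using pre unfolding is_preadditive_def by blast
lemma comp_add_r: "A \<in> Ob C \<Longrightarrow> B \<in> Ob C \<Longrightarrow> D \<in> Ob C \<Longrightarrow> f \<in> H A B \<Longrightarrow> g \<in> H A B \<Longrightarrow> h \<in> H B D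
  \<Longrightarrow> h \<cdot> (f \<oplus> g) = (h \<cdot> f) \<oplus> (h \<cdot> g)"
  using pre unfolding is_preadditive_def by blast
lemma comp_add_l: "A \<in> Ob C \<Longrightarrow> B \<in> Ob C \<Longrightarrow> D \<in> Ob C \<Longrightarrow> f \<in> H A B \<Longrightarrow> g \<in> H B D \<Longrightarrow> h \<in> H B D
  \<Longrightarrow> (g \<oplus> h) \<cdot> f = (g \<cdot> f) \<oplus> (h \<cdot> f)"
proof -
  assume a: "A \<in> Ob C" "B \<in> Ob C" "D \<in> Ob C" "f \<in> H A B" "g \<in> H B D" "h \<in> H B D"
  have "\<forall>A\<in>Ob C. \<forall>B\<in>Ob C. \<forall>D\<in>Ob C. \<forall>f\<in>Hom C A B. \<forall>g\<in>Hom C B D. \<forall>h\<in>Hom C B D.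
           cmp C (add C g h) f = add C (cmp C g f) (cmp C h f)"
    using pre unfolding is_preadditive_def by auto
  thus ?thesis using a by blast
qed

lemma zro_add: assumes "A \<in> Ob C" "B \<in> Ob C" "f \<in> H A B" shows "zz A B \<oplus> f = f"
proof -
  have "zz A B \<oplus> f = f \<oplus> zz A B" using assms by (intro add_comm) (simp_all add: zro_in)
  thus ?thesis using assms add_zro by simp
qed

lemma ngt_add: assumes "A \<in> Ob C" "B \<in> Ob C" "f \<in> H A B" shows "(\<ominus> f) \<oplus> f = zz A B"
proof -
  have "(\<ominus> f) \<oplus> f = f \<oplus> (\<ominus> f)" using assms by (intro add_comm) (simp_all add: ngt_in)
  thus ?thesis using assms add_ngt by simp
qed

lemma add_cancel: assumes "A \<in> Ob C" "B \<in> Ob C" "f \<in> H A B" "g \<in> H A B" "h \<in> H A B" "f \<oplus> g = f \<oplus> h"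
  shows "g = h"
proof -
  have "g = ((\<ominus> f) \<oplus> f) \<oplus> g" using assms by (simp add: ngt_add zro_add)
  also have "\<dots> = (\<ominus> f) \<oplus> (f \<oplus> g)" using assms by (intro add_assoc) (simp_all add: ngt_in)
  also have "\<dots> = (\<ominus> f) \<oplus> (f \<oplus> h)" using assms by simp
  also have "\<dots> = ((\<ominus> f) \<oplus> f) \<oplus> h" using assms by (intro add_assoc[symmetric]) (simp_all add: ngt_in)
  also have "\<dots> = h" using assms by (simp add: ngt_add zro_add)
  finally show ?thesis .
qed

lemma comp_zro_r: assumes "A \<in> Ob C" "B \<in> Ob C" "D \<in> Ob C" "g \<in> H B D" shows "g \<cdot> zz A B = zz A D"
proof -
  have z: "zz A B \<oplus> zz A B = zz A B" using assms by (simp add: add_zro zro_in)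
  have "g \<cdot> zz A B = (g \<cdot> zz A B) \<oplus> (g \<cdot> zz A B)" using assms comp_add_r[of A B D "zz A B" "zz A B" g] z
    by (simp add: zro_in)
  hence "(g \<cdot> zz A B) \<oplus> zz A D = (g \<cdot> zz A B) \<oplus> (g \<cdot> zz A B)" using assms
    by (simp add: add_zro comp_in zro_in)
  thus ?thesis using assms add_cancel by (metis comp_in zro_in)
qed

lemma comp_zro_l: assumes "A \<in> Ob C" "B \<in> Ob C" "D \<in> Ob C" "f \<in> H A B" shows "zz B D \<cdot> f = zz A D"
proof -
  have z: "zz B D \<oplus> zz B D = zz B D" using assms by (simp add: add_zro zro_in)
  have "zz B D \<cdot> f = (zz B D \<cdot> f) \<oplus> (zz B D \<cdot> f)" using assms comp_add_l[of A B D f "zz B D" "zz B D"] z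
    by (simp add: zro_in)
  hence "(zz B D \<cdot> f) \<oplus> zz A D = (zz B D \<cdot> f) \<oplus> (zz B D \<cdot> f)" using assms
    by (simp add: add_zro comp_in zro_in)
  thus ?thesis using assms add_cancel by (metis comp_in zro_in)
qed

lemma ngt_zro: assumes "A \<in> Ob C" "B \<in> Ob C" shows "\<ominus> (zz A B) = zz A B"
proof -
  have "\<ominus> (zz A B) = zz A B \<oplus> \<ominus> (zz A B)" using assms by (simp add: zro_add ngt_in zro_in)
  also have "\<dots> = zz A B" using assms by (simp add: add_ngt zro_in)
  finally show ?thesis .
qed

lemma comp_ngt_r: assumes "A \<in> Ob C" "B \<in> Ob C" "D \<in> Ob C" "f \<in> H A B" "h \<in> H B D"
  shows "h \<cdot> (\<ominus> f) = \<ominus> (h \<cdot> f)"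
proof -
  have "(h \<cdot> f) \<oplus> (h \<cdot> (\<ominus> f)) = h \<cdot> (f \<oplus> \<ominus> f)" using assms by (simp add: comp_add_r ngt_in)
  also have "\<dots> = zz A D" using assms by (simp add: add_ngt comp_zro_r)
  also have "\<dots> = (h \<cdot> f) \<oplus> \<ominus> (h \<cdot> f)" using assms by (simp add: add_ngt comp_in)
  finally show ?thesis using assms add_cancel by (metis comp_in ngt_in)
qed

lemma comp_ngt_l: assumes "A \<in> Ob C" "B \<in> Ob C" "D \<in> Ob C" "f \<in> H A B" "h \<in> H B D"
  shows "(\<ominus> h) \<cdot> f = \<ominus> (h \<cdot> f)"
proof -
  have "(h \<cdot> f) \<oplus> ((\<ominus> h) \<cdot> f) = (h \<oplus> \<ominus> h) \<cdot> f" using assms by (simp add: comp_add_l ngt_in)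
  also have "\<dots> = zz A D" using assms by (simp add: add_ngt comp_zro_l)
  also have "\<dots> = (h \<cdot> f) \<oplus> \<ominus> (h \<cdot> f)" using assms by (simp add: add_ngt comp_in)
  finally show ?thesis using assms add_cancel by (metis comp_in ngt_in)
qed

lemma sub_zero_eq: assumes "A \<in> Ob C" "B \<in> Ob C" "f \<in> H A B" "g \<in> H A B" "f \<oplus> (\<ominus> g) = zz A B"
  shows "f = g"
proof -
  have "f = f \<oplus> ((\<ominus> g) \<oplus> g)" using assms by (simp add: ngt_add add_zro)
  also have "\<dots> = (f \<oplus> (\<ominus> g)) \<oplus> g" using assms by (intro add_assoc[symmetric]) (simp_all add: ngt_in)
  also have "\<dots> = g" using assms by (simp add: zro_add)
  finally show ?thesis .
qed

lemma add_sub_cancel: assumes "A \<in> Ob C" "B \<in> Ob C" "x \<in> H A B" "y \<in> H A B" shows "x \<oplus> (y \<oplus> \<ominus> x) = y"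
proof -
  have "y \<oplus> \<ominus> x = (\<ominus> x) \<oplus> y" using assms add_comm[of A B y "\<ominus> x"] by (simp add: ngt_in)
  hence "x \<oplus> (y \<oplus> \<ominus> x) = x \<oplus> ((\<ominus> x) \<oplus> y)" by simp
  also have "\<dots> = (x \<oplus> (\<ominus> x)) \<oplus> y" using assms add_assoc[of A B x "\<ominus> x" y] by (simp add: ngt_in)
  also have "\<dots> = y" using assms by (simp add: add_ngt zro_add)
  finally show ?thesis .
qed

end

context abcat begin

lemma ker_ex: "A \<in> Ob C \<Longrightarrow> B \<in> Ob C \<Longrightarrow> f \<in> H A B \<Longrightarrow> \<exists>K k. is_kernel C A B f K k"
  using abel unfolding is_abelian_def by blast
lemma coker_ex: "A \<in> Ob C \<Longrightarrow> B \<in> Ob C \<Longrightarrow> f \<in> H A B \<Longrightarrow> \<exists>Q q. is_cokernel C A B f Q q"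
  using abel unfolding is_abelian_def by blast
lemma mono_ker_ax: "A \<in> Ob C \<Longrightarrow> B \<in> Ob C \<Longrightarrow> is_mono C A B m \<Longrightarrow> \<exists>D\<in>Ob C. \<exists>g\<in>H B D. is_kernel C B D g A m"
  using abel unfolding is_abelian_def by blast
lemma epi_coker_ax: "A \<in> Ob C \<Longrightarrow> B \<in> Ob C \<Longrightarrow> is_epi C A B e \<Longrightarrow> \<exists>D\<in>Ob C. \<exists>g\<in>H D A. is_cokernel C D A g B e"
  using abel unfolding is_abelian_def by blast
lemma biprod_ex: "A \<in> Ob C \<Longrightarrow> B \<in> Ob C \<Longrightarrow> \<exists>S i1 i2 p1 p2. is_biproduct C A B S i1 i2 p1 p2"
  using abel unfolding is_abelian_def by blast

lemma zero_to: "is_zero_obj C Z \<Longrightarrow> A \<in> Ob C \<Longrightarrow> f \<in> H A Z \<Longrightarrow> f = zz A Z"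
  unfolding is_zero_obj_def using zro_in by blast
lemma zero_from: "is_zero_obj C Z \<Longrightarrow> A \<in> Ob C \<Longrightarrow> f \<in> H Z A \<Longrightarrow> f = zz Z A"
  unfolding is_zero_obj_def using zro_in by blast

lemma zero_proj: assumes "is_zero_obj C Z" shows "is_projective C Z"
  unfolding is_projective_def
proof (intro conjI ballI allI impI)
  show "Z \<in> Ob C" using assms unfolding is_zero_obj_def by blast
  fix X Y e h assume X: "X \<in> Ob C" and Y: "Y \<in> Ob C" and eh: "is_epi C X Y e \<and> h \<in> H Z Y"
  have Z: "Z \<in> Ob C" using assms unfolding is_zero_obj_def by blast
  have e: "e \<in> H X Y" using eh unfolding is_epi_def by blast
  have "e \<cdot> zz Z X = zz Z Y" using comp_zro_r X Y Z e by blast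
  also have "\<dots> = h" using zero_from[OF assms Y, of h] eh by simp
  finally show "\<exists>h'\<in>H Z X. e \<cdot> h' = h" using zro_in[OF Z X] by blast
qed

lemma mono_zero: assumes "A \<in> Ob C" "B \<in> Ob C" "X \<in> Ob C" "is_mono C A B m" "g \<in> H X A" "m \<cdot> g = zz X B"
  shows "g = zz X A"
proof -
  have m: "m \<in> H A B" using assms unfolding is_mono_def by blast
  have "m \<cdot> zz X A = zz X B" using comp_zro_r assms m by blast
  moreover have "\<forall>X\<in>Ob C. \<forall>g\<in>H X A. \<forall>h\<in>H X A. m \<cdot> g = m \<cdot> h \<longrightarrow> g = h"
    using assms(4) unfolding is_mono_def by blast
  ultimately show ?thesis using assms(3,5,6) zro_in[OF assms(3,1)] by auto
qed

lemma monoI: assumes A: "A \<in> Ob C" and B: "B \<in> Ob C" and m: "m \<in> H A B"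
  and z: "\<And>X g. X \<in> Ob C \<Longrightarrow> g \<in> H X A \<Longrightarrow> m \<cdot> g = zz X B \<Longrightarrow> g = zz X A"
  shows "is_mono C A B m"
  unfolding is_mono_def
proof (intro conjI ballI impI)
  show "m \<in> H A B" by fact
  fix X g h assume X: "X \<in> Ob C" and g: "g \<in> H X A" and h: "h \<in> H X A" and e: "m \<cdot> g = m \<cdot> h"
  have nh: "\<ominus> h \<in> H X A" using ngt_in X A h by blast
  have "m \<cdot> (g \<oplus> \<ominus> h) = (m \<cdot> g) \<oplus> (m \<cdot> \<ominus> h)" using comp_add_r[OF X A B g nh m] .
  also have "\<dots> = (m \<cdot> h) \<oplus> \<ominus> (m \<cdot> h)" using e comp_ngt_r[OF X A B h m] by simp
  also have "\<dots> = zz X B" using add_ngt[OF X B] comp_in[OF X A B h m] by blast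
  finally have "g \<oplus> \<ominus> h = zz X A" using z[OF X] add_in[OF X A g nh] by blast
  thus "g = h" using sub_zero_eq[OF X A g h] by blast
qed

lemma epi_zero: assumes "A \<in> Ob C" "B \<in> Ob C" "Y \<in> Ob C" "is_epi C A B e" "g \<in> H B Y" "g \<cdot> e = zz A Y"
  shows "g = zz B Y"
proof -
  have e: "e \<in> H A B" using assms unfolding is_epi_def by blast
  have "zz B Y \<cdot> e = zz A Y" using comp_zro_l assms e by blast
  moreover have "\<forall>X\<in>Ob C. \<forall>g\<in>H B X. \<forall>h\<in>H B X. g \<cdot> e = h \<cdot> e \<longrightarrow> g = h"
    using assms(4) unfolding is_epi_def by blast
  ultimately show ?thesis using assms(3,5,6) zro_in[OF assms(2,3)] by auto
qed

lemma epiI: assumes A: "A \<in> Ob C" and B: "B \<in> Ob C" and e: "e \<in> H A B"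
  and z: "\<And>Y g. Y \<in> Ob C \<Longrightarrow> g \<in> H B Y \<Longrightarrow> g \<cdot> e = zz A Y \<Longrightarrow> g = zz B Y"
  shows "is_epi C A B e"
  unfolding is_epi_def
proof (intro conjI ballI impI)
  show "e \<in> H A B" by fact
  fix Y g h assume Y: "Y \<in> Ob C" and g: "g \<in> H B Y" and h: "h \<in> H B Y" and eq: "g \<cdot> e = h \<cdot> e"
  have nh: "\<ominus> h \<in> H B Y" using ngt_in Y B h by blast
  have "(g \<oplus> \<ominus> h) \<cdot> e = (g \<cdot> e) \<oplus> (\<ominus> h \<cdot> e)" using comp_add_l[OF A B Y e g nh] .
  also have "\<dots> = (h \<cdot> e) \<oplus> \<ominus> (h \<cdot> e)" using eq comp_ngt_l[OF A B Y e h] by simp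
  also have "\<dots> = zz A Y" using add_ngt[OF A Y] comp_in[OF A B Y e h] by blast
  finally have "g \<oplus> \<ominus> h = zz B Y" using z[OF Y] add_in[OF B Y g nh] by blast
  thus "g = h" using sub_zero_eq[OF B Y g h] by blast
qed

lemma ex1_eq: "\<exists>!u. P u \<Longrightarrow> P a \<Longrightarrow> P b \<Longrightarrow> a = b" by blast

lemma kerD: assumes "is_kernel C A B f K k"
  shows "f \<in> H A B" "K \<in> Ob C" "k \<in> H K A" "f \<cdot> k = zz K B"
  using assms unfolding is_kernel_def by simp_all
lemma kerU: assumes "is_kernel C A B f K k" "X \<in> Ob C" "h \<in> H X A" "f \<cdot> h = zz X B"
  shows "\<exists>!u. u \<in> H X K \<and> k \<cdot> u = h"
proof -
  have "\<forall>X\<in>Ob C. \<forall>h\<in>H X A. f \<cdot> h = zz X B \<longrightarrow> (\<exists>!u. u \<in> H X K \<and> k \<cdot> u = h)"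
    using assms(1) unfolding is_kernel_def by simp
  thus ?thesis using assms(2-4) by simp
qed
lemma cokD: assumes "is_cokernel C A B f Q q"
  shows "f \<in> H A B" "Q \<in> Ob C" "q \<in> H B Q" "q \<cdot> f = zz A Q"
  using assms unfolding is_cokernel_def by simp_all
lemma cokU: assumes "is_cokernel C A B f Q q" "Y \<in> Ob C" "h \<in> H B Y" "h \<cdot> f = zz A Y"
  shows "\<exists>!u. u \<in> H Q Y \<and> u \<cdot> q = h"
proof -
  have "\<forall>Y\<in>Ob C. \<forall>h\<in>H B Y. h \<cdot> f = zz A Y \<longrightarrow> (\<exists>!u. u \<in> H Q Y \<and> u \<cdot> q = h)"
    using assms(1) unfolding is_cokernel_def by simp
  thus ?thesis using assms(2-4) by simp
qed
lemma monoD: "is_mono C A B m \<Longrightarrow> m \<in> H A B" unfolding is_mono_def by simp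
lemma epiD: "is_epi C A B m \<Longrightarrow> m \<in> H A B" unfolding is_epi_def by simp

lemma kernel_mono: assumes A: "A \<in> Ob C" and B: "B \<in> Ob C" and ker: "is_kernel C A B f K k"
  shows "is_mono C K A k"
proof -
  note kd = kerD[OF ker]
  show ?thesis
  proof (rule monoI[OF kd(2) A kd(3)])
    fix X g assume X: "X \<in> Ob C" and g: "g \<in> H X K" and e: "k \<cdot> g = zz X A"
    have "f \<cdot> zz X A = zz X B" using comp_zro_r[OF X A B kd(1)] .
    hence U: "\<exists>!u. u \<in> H X K \<and> k \<cdot> u = zz X A" using kerU[OF ker X zro_in[OF X A]] by simp
    have "k \<cdot> zz X K = zz X A" using comp_zro_r[OF X kd(2) A kd(3)] .
    thus "g = zz X K" using ex1_eq[OF U] g e zro_in[OF X kd(2)] by blast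
  qed
qed

lemma coker_epi: assumes A: "A \<in> Ob C" and B: "B \<in> Ob C" and cok: "is_cokernel C A B f Q q"
  shows "is_epi C B Q q"
proof -
  note kd = cokD[OF cok]
  show ?thesis
  proof (rule epiI[OF B kd(2) kd(3)])
    fix Y g assume Y: "Y \<in> Ob C" and g: "g \<in> H Q Y" and e: "g \<cdot> q = zz B Y"
    have "zz B Y \<cdot> f = zz A Y" using comp_zro_l[OF A B Y kd(1)] .
    hence U: "\<exists>!u. u \<in> H Q Y \<and> u \<cdot> q = zz B Y" using cokU[OF cok Y zro_in[OF B Y]] by simp
    have "zz Q Y \<cdot> q = zz B Y" using comp_zro_l[OF B kd(2) Y kd(3)] .
    thus "g = zz Q Y" using ex1_eq[OF U] g e zro_in[OF kd(2) Y] by blast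
  qed
qed

lemma mono_comp: assumes A: "A \<in> Ob C" and B: "B \<in> Ob C" and D: "D \<in> Ob C"
  and m1: "is_mono C A B m" and m2: "is_mono C B D n" shows "is_mono C A D (n \<cdot> m)"
proof -
  have m: "m \<in> H A B" and n: "n \<in> H B D" using m1 m2 monoD by blast+
  show ?thesis
  proof (rule monoI[OF A D comp_in[OF A B D m n]])
    fix X g assume X: "X \<in> Ob C" and g: "g \<in> H X A" and z: "(n \<cdot> m) \<cdot> g = zz X D"
    have "n \<cdot> (m \<cdot> g) = zz X D" using z assoc[OF X A B D g m n] by simp
    hence "m \<cdot> g = zz X B" using mono_zero[OF B D X m2 comp_in[OF X A B g m]] by blast
    thus "g = zz X A" using mono_zero[OF A B X m1 g] by blast
  qed
qed

end

context abcat begin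

lemma mono_is_kernel: assumes A: "A \<in> Ob C" and B: "B \<in> Ob C" and m: "is_mono C A B m"
  and cok: "is_cokernel C A B m Q c" shows "is_kernel C B Q c A m"
proof -
  obtain D g where D: "D \<in> Ob C" and g: "g \<in> H B D" and gk: "is_kernel C B D g A m"
    using mono_ker_ax[OF A B m] by blast
  note cd = cokD[OF cok]
  have m': "m \<in> H A B" using monoD[OF m] .
  have "g \<cdot> m = zz A D" using kerD[OF gk] by simp
  then obtain g' where g': "g' \<in> H Q D" "g' \<cdot> c = g" using cokU[OF cok D g] by blast
  show ?thesis
    unfolding is_kernel_def
  proof (intro conjI ballI impI)
    show "c \<in> H B Q" "A \<in> Ob C" "m \<in> H A B" "c \<cdot> m = zz A Q" using cd A m' by simp_all
    fix X h assume X: "X \<in> Ob C" and h: "h \<in> H X B" and ch: "c \<cdot> h = zz X Q"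
    have "g \<cdot> h = g' \<cdot> (c \<cdot> h)" using g' assoc[OF X B cd(2) D h cd(3) g'(1)] by simp
    also have "\<dots> = zz X D" using ch comp_zro_r[OF X cd(2) D g'(1)] by simp
    finally show "\<exists>!u. u \<in> H X A \<and> m \<cdot> u = h" using kerU[OF gk X h] by simp
  qed
qed

lemma epi_is_coker: assumes A: "A \<in> Ob C" and B: "B \<in> Ob C" and e: "is_epi C A B e"
  and ker: "is_kernel C A B e K k" shows "is_cokernel C K A k B e"
proof -
  obtain D g where D: "D \<in> Ob C" and g: "g \<in> H D A" and gc: "is_cokernel C D A g B e"
    using epi_coker_ax[OF A B e] by blast
  note kd = kerD[OF ker]
  have e': "e \<in> H A B" using epiD[OF e] .
  have "e \<cdot> g = zz D B" using cokD[OF gc] by simp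
  then obtain g' where g': "g' \<in> H D K" "k \<cdot> g' = g" using kerU[OF ker D g] by blast
  show ?thesis
    unfolding is_cokernel_def
  proof (intro conjI ballI impI)
    show "k \<in> H K A" "B \<in> Ob C" "e \<in> H A B" "e \<cdot> k = zz K B" using kd B e' by simp_all
    fix Y h assume Y: "Y \<in> Ob C" and h: "h \<in> H A Y" and hk: "h \<cdot> k = zz K Y"
    have "h \<cdot> g = (h \<cdot> k) \<cdot> g'" using g' assoc[OF D kd(2) A Y g'(1) kd(3) h] by simp
    also have "\<dots> = zz D Y" using hk comp_zro_l[OF D kd(2) Y g'(1)] by simp
    finally show "\<exists>!u. u \<in> H B Y \<and> u \<cdot> e = h" using cokU[OF gc Y h] by simp
  qed
qed

lemma ker_comp_mono: assumes A: "A \<in> Ob C" and I: "I \<in> Ob C" and B: "B \<in> Ob C"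
  and ker: "is_kernel C A I e K kk" and k: "is_mono C I B k"
  shows "is_kernel C A B (k \<cdot> e) K kk"
proof -
  note kd = kerD[OF ker]
  have k': "k \<in> H I B" using monoD[OF k] .
  show ?thesis
    unfolding is_kernel_def
  proof (intro conjI ballI impI)
    show ke: "k \<cdot> e \<in> H A B" using comp_in[OF A I B kd(1) k'] .
    show "K \<in> Ob C" "kk \<in> H K A" using kd by simp_all
    have "(k \<cdot> e) \<cdot> kk = k \<cdot> (e \<cdot> kk)" using assoc[OF kd(2) A I B kd(3) kd(1) k'] by simp
    also have "\<dots> = zz K B" using kd(4) comp_zro_r[OF kd(2) I B k'] by simp
    finally show "(k \<cdot> e) \<cdot> kk = zz K B" .
    fix X h assume X: "X \<in> Ob C" and h: "h \<in> H X A" and z: "(k \<cdot> e) \<cdot> h = zz X B"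
    have "k \<cdot> (e \<cdot> h) = zz X B" using z assoc[OF X A I B h kd(1) k'] by simp
    hence "e \<cdot> h = zz X I" using mono_zero[OF I B X k comp_in[OF X A I h kd(1)]] by blast
    thus "\<exists>!u. u \<in> H X K \<and> kk \<cdot> u = h" using kerU[OF ker X h] by simp
  qed
qed

lemma coker_comp_epi: assumes A: "A \<in> Ob C" and I: "I \<in> Ob C" and B: "B \<in> Ob C"
  and cok: "is_cokernel C I B k Q q" and e: "is_epi C A I e"
  shows "is_cokernel C A B (k \<cdot> e) Q q"
proof -
  note cd = cokD[OF cok]
  have e': "e \<in> H A I" using epiD[OF e] .
  show ?thesis
    unfolding is_cokernel_def
  proof (intro conjI ballI impI)
    show ke: "k \<cdot> e \<in> H A B" using comp_in[OF A I B e' cd(1)] .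
    show "Q \<in> Ob C" "q \<in> H B Q" using cd by simp_all
    have "q \<cdot> (k \<cdot> e) = (q \<cdot> k) \<cdot> e" using assoc[OF A I B cd(2) e' cd(1) cd(3)] by simp
    also have "\<dots> = zz A Q" using cd(4) comp_zro_l[OF A I cd(2) e'] by simp
    finally show "q \<cdot> (k \<cdot> e) = zz A Q" .
    fix Y h assume Y: "Y \<in> Ob C" and h: "h \<in> H B Y" and z: "h \<cdot> (k \<cdot> e) = zz A Y"
    have "(h \<cdot> k) \<cdot> e = zz A Y" using z assoc[OF A I B Y e' cd(1) h] by simp
    hence "h \<cdot> k = zz I Y" using epi_zero[OF A I Y e comp_in[OF I B Y cd(1) h]] by blast
    thus "\<exists>!u. u \<in> H Q Y \<and> u \<cdot> q = h" using cokU[OF cok Y h] by simp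
  qed
qed

lemma coker_of_exact: assumes A: "A \<in> Ob C" and B: "B \<in> Ob C" and I: "I \<in> Ob C"
  and f: "f \<in> H A B" and e: "is_epi C B I e" and ef: "e \<cdot> f = zz A I"
  and ex: "\<And>K kk Q qq. is_kernel C B I e K kk \<Longrightarrow> is_cokernel C A B f Q qq \<Longrightarrow> qq \<cdot> kk = zz K Q"
  shows "is_cokernel C A B f I e"
proof -
  have e': "e \<in> H B I" using epiD[OF e] .
  obtain K kk where ker: "is_kernel C B I e K kk" using ker_ex[OF B I e'] by blast
  note kd = kerD[OF ker]
  have ec: "is_cokernel C K B kk I e" using epi_is_coker[OF B I e ker] .
  obtain Q qq where cq: "is_cokernel C A B f Q qq" using coker_ex[OF A B f] by blast
  note cd = cokD[OF cq]
  have z: "qq \<cdot> kk = zz K Q" using ex[OF ker cq] .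
  show ?thesis
    unfolding is_cokernel_def
  proof (intro conjI ballI impI)
    show "f \<in> H A B" "I \<in> Ob C" "e \<in> H B I" "e \<cdot> f = zz A I" using f I e' ef by simp_all
    fix Y h assume Y: "Y \<in> Ob C" and h: "h \<in> H B Y" and hf: "h \<cdot> f = zz A Y"
    obtain h' where h': "h' \<in> H Q Y" "h' \<cdot> qq = h" using cokU[OF cq Y h hf] by blast
    have "h \<cdot> kk = h' \<cdot> (qq \<cdot> kk)" using h' assoc[OF kd(2) B cd(2) Y kd(3) cd(3) h'(1)] by simp
    also have "\<dots> = zz K Y" using z comp_zro_r[OF kd(2) cd(2) Y h'(1)] by simp
    finally show "\<exists>!u. u \<in> H I Y \<and> u \<cdot> e = h" using cokU[OF ec Y h] by simp
  qed
qed

end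

context abcat begin

lemma mono_eq: "is_mono C A B m \<Longrightarrow> X \<in> Ob C \<Longrightarrow> g \<in> H X A \<Longrightarrow> h \<in> H X A \<Longrightarrow> m \<cdot> g = m \<cdot> h \<Longrightarrow> g = h"
  unfolding is_mono_def by blast
lemma epi_eq: "is_epi C A B e \<Longrightarrow> Y \<in> Ob C \<Longrightarrow> g \<in> H B Y \<Longrightarrow> h \<in> H B Y \<Longrightarrow> g \<cdot> e = h \<cdot> e \<Longrightarrow> g = h"
  unfolding is_epi_def by blast

lemma image_fact: assumes A: "A \<in> Ob C" and B: "B \<in> Ob C" and f: "f \<in> H A B"
  shows "\<exists>I k e. I \<in> Ob C \<and> is_mono C I B k \<and> is_epi C A I e \<and> f = k \<cdot> e"
proof -
  obtain C0 c where cc: "is_cokernel C A B f C0 c" using coker_ex[OF A B f] by blast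
  note cd = cokD[OF cc]
  obtain K k where kk: "is_kernel C B C0 c K k" using ker_ex[OF B cd(2) cd(3)] by blast
  note kd = kerD[OF kk]
  obtain e where e: "e \<in> H A K" "k \<cdot> e = f" using kerU[OF kk A f cd(4)] by blast
  have km: "is_mono C K B k" using kernel_mono[OF B cd(2) kk] .
  have ep: "is_epi C A K e"
  proof (rule epiI[OF A kd(2) e(1)])
    fix Y g assume Y: "Y \<in> Ob C" and g: "g \<in> H K Y" and ge: "g \<cdot> e = zz A Y"
    obtain Q' c' where cc': "is_cokernel C A K e Q' c'" using coker_ex[OF A kd(2) e(1)] by blast
    note cd' = cokD[OF cc']
    obtain K' k' where kk': "is_kernel C K Q' c' K' k'" using ker_ex[OF kd(2) cd'(2) cd'(3)] by blast
    note kd' = kerD[OF kk']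
    obtain e' where e': "e' \<in> H A K'" "k' \<cdot> e' = e" using kerU[OF kk' A e(1) cd'(4)] by blast
    have km': "is_mono C K' K k'" using kernel_mono[OF kd(2) cd'(2) kk'] .
    have kkm: "is_mono C K' B (k \<cdot> k')" using mono_comp[OF kd'(2) kd(2) B km' km] .
    have kk'in: "k \<cdot> k' \<in> H K' B" using monoD[OF kkm] .
    obtain D d where dc: "is_cokernel C K' B (k \<cdot> k') D d" using coker_ex[OF kd'(2) B kk'in] by blast
    note dd = cokD[OF dc]
    have dk: "is_kernel C B D d K' (k \<cdot> k')" using mono_is_kernel[OF kd'(2) B kkm dc] .
    have "f = k \<cdot> (k' \<cdot> e')" using e e' by simp
    also have "\<dots> = (k \<cdot> k') \<cdot> e'" using assoc[OF A kd'(2) kd(2) B e'(1) kd'(3) kd(3)] .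
    finally have "d \<cdot> f = (d \<cdot> (k \<cdot> k')) \<cdot> e'" using assoc[OF A kd'(2) B dd(2) e'(1) kk'in dd(3)] by simp
    also have "\<dots> = zz A D" using dd(4) comp_zro_l[OF A kd'(2) dd(2) e'(1)] by simp
    finally obtain d' where d': "d' \<in> H C0 D" "d' \<cdot> c = d" using cokU[OF cc dd(2) dd(3)] by blast
    have "d \<cdot> k = d' \<cdot> (c \<cdot> k)" using d' assoc[OF kd(2) B cd(2) dd(2) kd(3) cd(3) d'(1)] by simp
    also have "\<dots> = zz K D" using kd(4) comp_zro_r[OF kd(2) cd(2) dd(2) d'(1)] by simp
    finally obtain v where v: "v \<in> H K K'" "(k \<cdot> k') \<cdot> v = k" using kerU[OF dk kd(2) kd(3)] by blast
    have "k \<cdot> (k' \<cdot> v) = k \<cdot> idm C K" using v assoc[OF kd(2) kd'(2) kd(2) B v(1) kd'(3) kd(3)]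
        id_r[OF kd(2) B kd(3)] by simp
    hence kv: "k' \<cdot> v = idm C K" using mono_eq[OF km kd(2) comp_in[OF kd(2) kd'(2) kd(2) v(1) kd'(3)] id_in[OF kd(2)]] by blast
    have "c' = c' \<cdot> idm C K" using id_r[OF kd(2) cd'(2) cd'(3)] by simp
    also have "\<dots> = (c' \<cdot> k') \<cdot> v" using kv assoc[OF kd(2) kd'(2) kd(2) cd'(2) v(1) kd'(3) cd'(3)] by simp
    also have "\<dots> = zz K Q'" using kd'(4) comp_zro_l[OF kd(2) kd'(2) cd'(2) v(1)] by simp
    finally have c'z: "c' = zz K Q'" .
    obtain u where u: "u \<in> H Q' Y" "u \<cdot> c' = g" using cokU[OF cc' Y g ge] by blast
    show "g = zz K Y" using u c'z comp_zro_r[OF kd(2) cd'(2) Y u(1)] by simp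
  qed
  show ?thesis using kd(2) km ep e(2) by blast
qed

lemma zero_objI: assumes A: "A \<in> Ob C" and i: "idm C A = zz A A" shows "is_zero_obj C A"
  unfolding is_zero_obj_def
proof (intro conjI ballI)
  show "A \<in> Ob C" by fact
  fix B assume B: "B \<in> Ob C"
  have "\<And>f. f \<in> H B A \<Longrightarrow> f = zz B A"
  proof -
    fix f assume f: "f \<in> H B A"
    have "f = idm C A \<cdot> f" using id_l[OF B A f] by simp
    thus "f = zz B A" using i comp_zro_l[OF B A A f] by simp
  qed
  thus "\<exists>!f. f \<in> H B A" using zro_in[OF B A] by blast
  have "\<And>f. f \<in> H A B \<Longrightarrow> f = zz A B"
  proof -
    fix f assume f: "f \<in> H A B"
    have "f = f \<cdot> idm C A" using id_r[OF A B f] by simp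
    thus "f = zz A B" using i comp_zro_r[OF A A B f] by simp
  qed
  thus "\<exists>!f. f \<in> H A B" using zro_in[OF A B] by blast
qed

lemma mono_to_zero: assumes A: "A \<in> Ob C" and Z: "is_zero_obj C Z" and m: "is_mono C A Z m"
  shows "is_zero_obj C A"
proof -
  have Zo: "Z \<in> Ob C" using Z unfolding is_zero_obj_def by blast
  have m': "m \<in> H A Z" using monoD[OF m] .
  have "m \<cdot> idm C A = m \<cdot> zz A A"
    using zero_to[OF Z A comp_in[OF A A Zo id_in[OF A] m']] zero_to[OF Z A comp_in[OF A A Zo zro_in[OF A A] m']]
    by simp
  hence "idm C A = zz A A" using mono_eq[OF m A id_in[OF A] zro_in[OF A A]] by blast
  thus ?thesis using zero_objI[OF A] by blast
qed

end

context abcat begin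

lemma biprodD: assumes "is_biproduct C A B S i1 i2 p1 p2"
  shows "S \<in> Ob C" "i1 \<in> H A S" "i2 \<in> H B S" "p1 \<in> H S A" "p2 \<in> H S B"
    "p1 \<cdot> i1 = idm C A" "p2 \<cdot> i2 = idm C B" "p1 \<cdot> i2 = zz B A" "p2 \<cdot> i1 = zz A B"
    "(i1 \<cdot> p1) \<oplus> (i2 \<cdot> p2) = idm C S"
  using assms unfolding is_biproduct_def by simp_all

lemma sesD: assumes "short_exact C A B X m q"
  shows "A \<in> Ob C" "B \<in> Ob C" "X \<in> Ob C" "is_mono C A B m" "is_epi C B X q" "m \<in> H A B" "q \<in> H B X"
    "q \<cdot> m = zz A X"
    "\<And>K kk Q qq. is_kernel C B X q K kk \<Longrightarrow> is_cokernel C A B m Q qq \<Longrightarrow> qq \<cdot> kk = zz K Q"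
  using assms unfolding short_exact_def is_exact_def by blast+

lemma ses_coker: assumes "short_exact C A B X m q" shows "is_cokernel C A B m X q"
  using sesD[OF assms] coker_of_exact by blast

lemma extend: assumes ses: "short_exact C A B X m q" and Io: "Ii \<in> Ob C" and ext: "ext1_zero C X Ii"
  and a: "a \<in> H A Ii"
  shows "\<exists>b\<in>H B Ii. b \<cdot> m = a"
proof -
  note sd = sesD[OF ses]
  have A: "A \<in> Ob C" and B: "B \<in> Ob C" and X: "X \<in> Ob C" and m: "m \<in> H A B" and q: "q \<in> H B X"
    using sd by blast+
  obtain P i1 i2 p1 p2 where bp: "is_biproduct C B Ii P i1 i2 p1 p2" using biprod_ex[OF B Io] by blast
  note bd = biprodD[OF bp]
  have P: "P \<in> Ob C" using bd by blast
  have i1m: "i1 \<cdot> m \<in> H A P" using comp_in[OF A B P m bd(2)] .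
  have i2a: "i2 \<cdot> a \<in> H A P" using comp_in[OF A Io P a bd(3)] .
  have ni2a: "\<ominus> (i2 \<cdot> a) \<in> H A P" using ngt_in[OF A P i2a] .
  define \<phi> where "\<phi> = (i1 \<cdot> m) \<oplus> \<ominus> (i2 \<cdot> a)"
  have phi: "\<phi> \<in> H A P" unfolding \<phi>_def using add_in[OF A P i1m ni2a] .
  have "p1 \<cdot> \<phi> = (p1 \<cdot> (i1 \<cdot> m)) \<oplus> (p1 \<cdot> \<ominus> (i2 \<cdot> a))"
    unfolding \<phi>_def using comp_add_r[OF A P B i1m ni2a bd(4)] .
  also have "\<dots> = ((p1 \<cdot> i1) \<cdot> m) \<oplus> \<ominus> ((p1 \<cdot> i2) \<cdot> a)"
    using assoc[OF A B P B m bd(2) bd(4)] assoc[OF A Io P B a bd(3) bd(4)] comp_ngt_r[OF A P B i2a bd(4)] by simp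
  also have "\<dots> = m \<oplus> \<ominus> (zz A B)" using bd(6,8) id_l[OF A B m] comp_zro_l[OF A Io B a] by simp
  also have "\<dots> = m" using ngt_zro[OF A B] add_zro[OF A B m] by simp
  finally have p1phi: "p1 \<cdot> \<phi> = m" .
  have phim: "is_mono C A P \<phi>"
  proof (rule monoI[OF A P phi])
    fix T g assume T: "T \<in> Ob C" and g: "g \<in> H T A" and z: "\<phi> \<cdot> g = zz T P"
    have "m \<cdot> g = p1 \<cdot> (\<phi> \<cdot> g)" using p1phi assoc[OF T A P B g phi bd(4)] by simp
    also have "\<dots> = zz T B" using z comp_zro_r[OF T P B bd(4)] by simp
    finally show "g = zz T A" using mono_zero[OF A B T sd(4) g] by blast
  qed
  obtain E c where cc: "is_cokernel C A P \<phi> E c" using coker_ex[OF A P phi] by blast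
  note cd = cokD[OF cc]
  have E: "E \<in> Ob C" using cd by blast
  have c: "c \<in> H P E" using cd by blast
  have ck: "is_kernel C P E c A \<phi>" using mono_is_kernel[OF A P phim cc] .
  have cepi: "is_epi C P E c" using coker_epi[OF A P cc] .
  define j where "j = c \<cdot> i2"
  have j: "j \<in> H Ii E" unfolding j_def using comp_in[OF Io P E bd(3) c] .
  have qp1: "q \<cdot> p1 \<in> H P X" using comp_in[OF P B X bd(4) q] .
  have "(q \<cdot> p1) \<cdot> \<phi> = zz A X" using assoc[OF A P B X phi bd(4) q] p1phi sd(8) by simp
  then obtain q' where q': "q' \<in> H E X" "q' \<cdot> c = q \<cdot> p1" using cokU[OF cc X qp1] by blast
  have "\<phi> \<oplus> (i2 \<cdot> a) = (i1 \<cdot> m) \<oplus> ((\<ominus> (i2 \<cdot> a)) \<oplus> (i2 \<cdot> a))"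
    unfolding \<phi>_def using add_assoc[OF A P i1m ni2a i2a] .
  also have "\<dots> = i1 \<cdot> m" using ngt_add[OF A P i2a] add_zro[OF A P i1m] by simp
  finally have i1m_eq: "i1 \<cdot> m = \<phi> \<oplus> (i2 \<cdot> a)" by simp
  have "c \<cdot> (i1 \<cdot> m) = (c \<cdot> \<phi>) \<oplus> (c \<cdot> (i2 \<cdot> a))" using i1m_eq comp_add_r[OF A P E phi i2a c] by simp
  also have "\<dots> = j \<cdot> a" using cd(4) zro_add[OF A E comp_in[OF A Io E a j]] assoc[OF A Io P E a bd(3) c]
    unfolding j_def by simp
  finally have key: "c \<cdot> (i1 \<cdot> m) = j \<cdot> a" .
  have qj: "q' \<cdot> j = zz Ii X"
  proof -
    have "q' \<cdot> j = (q' \<cdot> c) \<cdot> i2" unfolding j_def using assoc[OF Io P E X bd(3) c q'(1)] .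
    also have "\<dots> = q \<cdot> (p1 \<cdot> i2)" using q'(2) assoc[OF Io P B X bd(3) bd(4) q] by simp
    also have "\<dots> = zz Ii X" using bd(8) comp_zro_r[OF Io B X q] by simp
    finally show ?thesis .
  qed
  have jm: "is_mono C Ii E j"
  proof (rule monoI[OF Io E j])
    fix T g assume T: "T \<in> Ob C" and g: "g \<in> H T Ii" and z: "j \<cdot> g = zz T E"
    have i2g: "i2 \<cdot> g \<in> H T P" using comp_in[OF T Io P g bd(3)] .
    have "c \<cdot> (i2 \<cdot> g) = zz T E" using z assoc[OF T Io P E g bd(3) c] unfolding j_def by simp
    then obtain w where w: "w \<in> H T A" "\<phi> \<cdot> w = i2 \<cdot> g" using kerU[OF ck T i2g] by blast
    have "m \<cdot> w = p1 \<cdot> (\<phi> \<cdot> w)" using p1phi assoc[OF T A P B w(1) phi bd(4)] by simp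
    also have "\<dots> = (p1 \<cdot> i2) \<cdot> g" using w(2) assoc[OF T Io P B g bd(3) bd(4)] by simp
    also have "\<dots> = zz T B" using bd(8) comp_zro_l[OF T Io B g] by simp
    finally have "w = zz T A" using mono_zero[OF A B T sd(4) w(1)] by blast
    hence i2gz: "i2 \<cdot> g = zz T P" using w(2) comp_zro_r[OF T A P phi] by simp
    have "g = (p2 \<cdot> i2) \<cdot> g" using bd(7) id_l[OF T Io g] by simp
    also have "\<dots> = p2 \<cdot> (i2 \<cdot> g)" using assoc[OF T Io P Io g bd(3) bd(5)] by simp
    also have "\<dots> = zz T Ii" using i2gz comp_zro_r[OF T P Io bd(5)] by simp
    finally show "g = zz T Ii" .
  qed
  have q'e: "is_epi C E X q'"
  proof (rule epiI[OF E X q'(1)])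
    fix Y g assume Y: "Y \<in> Ob C" and g: "g \<in> H X Y" and z: "g \<cdot> q' = zz E Y"
    have gq': "g \<cdot> q' \<in> H E Y" using comp_in[OF E X Y q'(1) g] .
    have "q = (q \<cdot> p1) \<cdot> i1" using assoc[OF B P B X bd(2) bd(4) q] bd(6) id_r[OF B X q] by simp
    hence "g \<cdot> q = g \<cdot> ((q' \<cdot> c) \<cdot> i1)" using q'(2) by simp
    also have "\<dots> = ((g \<cdot> q') \<cdot> c) \<cdot> i1"
      using assoc[OF B P X Y bd(2) comp_in[OF P E X c q'(1)] g] assoc[OF P E X Y c q'(1) g] by simp
    also have "\<dots> = zz B Y" using z comp_zro_l[OF P E Y c] comp_zro_l[OF B P Y bd(2)] by simp
    finally show "g = zz X Y" using epi_zero[OF B X Y sd(5) g] by blast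
  qed
  have qc: "is_cokernel C A B m X q" using ses_coker[OF ses] .
  have exE: "\<And>K kk Q qq. is_kernel C E X q' K kk \<Longrightarrow> is_cokernel C Ii E j Q qq \<Longrightarrow> qq \<cdot> kk = zz K Q"
  proof -
    fix K kk Q qq assume kk: "is_kernel C E X q' K kk" and qq: "is_cokernel C Ii E j Q qq"
    note kd = kerD[OF kk] and qd = cokD[OF qq]
    have K: "K \<in> Ob C" and Q: "Q \<in> Ob C" using kd qd by blast+
    have qqc: "qq \<cdot> c \<in> H P Q" using comp_in[OF P E Q c qd(3)] .
    define r where "r = (qq \<cdot> c) \<cdot> i1"
    have r: "r \<in> H B Q" unfolding r_def using comp_in[OF B P Q bd(2) qqc] .
    have "r \<cdot> m = (qq \<cdot> c) \<cdot> (i1 \<cdot> m)" unfolding r_def using assoc[OF A B P Q m bd(2) qqc] by simp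
    also have "\<dots> = qq \<cdot> (j \<cdot> a)" using key assoc[OF A P E Q i1m c qd(3)] by simp
    also have "\<dots> = zz A Q" using assoc[OF A Io E Q a j qd(3)] qd(4) comp_zro_l[OF A Io Q a] by simp
    finally obtain r' where r': "r' \<in> H X Q" "r' \<cdot> q = r" using cokU[OF qc Q r] by blast
    have "(qq \<cdot> c) \<cdot> i2 = zz Ii Q" using assoc[OF Io P E Q bd(3) c qd(3)] qd(4) unfolding j_def by simp
    have "qq \<cdot> c = (qq \<cdot> c) \<cdot> ((i1 \<cdot> p1) \<oplus> (i2 \<cdot> p2))" using bd(10) id_r[OF P Q qqc] by simp
    also have "\<dots> = ((qq \<cdot> c) \<cdot> (i1 \<cdot> p1)) \<oplus> ((qq \<cdot> c) \<cdot> (i2 \<cdot> p2))"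
      using comp_add_r[OF P P Q comp_in[OF P B P bd(4) bd(2)] comp_in[OF P Io P bd(5) bd(3)] qqc] .
    also have "\<dots> = (r \<cdot> p1) \<oplus> (((qq \<cdot> c) \<cdot> i2) \<cdot> p2)"
      unfolding r_def using assoc[OF P B P Q bd(4) bd(2) qqc] assoc[OF P Io P Q bd(5) bd(3) qqc] by simp
    also have "\<dots> = (r \<cdot> p1) \<oplus> zz P Q"
      using \<open>(qq \<cdot> c) \<cdot> i2 = zz Ii Q\<close> comp_zro_l[OF P Io Q bd(5)] by simp
    also have "\<dots> = r \<cdot> p1" using add_zro[OF P Q comp_in[OF P B Q bd(4) r]] .
    also have "\<dots> = r' \<cdot> (q' \<cdot> c)" using r'(2) q'(2) assoc[OF P B X Q bd(4) q r'(1)] by simp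
    also have "\<dots> = (r' \<cdot> q') \<cdot> c" using assoc[OF P E X Q c q'(1) r'(1)] .
    finally have "qq \<cdot> c = (r' \<cdot> q') \<cdot> c" .
    hence qqeq: "qq = r' \<cdot> q'" using epi_eq[OF cepi Q qd(3) comp_in[OF E X Q q'(1) r'(1)]] by blast
    have "qq \<cdot> kk = r' \<cdot> (q' \<cdot> kk)" using qqeq assoc[OF K E X Q kd(3) q'(1) r'(1)] by simp
    also have "\<dots> = zz K Q" using kd(4) comp_zro_r[OF K X Q r'(1)] by simp
    finally show "qq \<cdot> kk = zz K Q" .
  qed
  have ses2: "short_exact C Ii E X j q'"
    unfolding short_exact_def is_exact_def using Io E X jm q'e j q'(1) qj exE by blast
  obtain ret where ret: "ret \<in> H E Ii" "ret \<cdot> j = idm C Ii" using ext ses2 unfolding ext1_zero_def by blast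
  define b where "b = (ret \<cdot> c) \<cdot> i1"
  have retc: "ret \<cdot> c \<in> H P Ii" using comp_in[OF P E Io c ret(1)] .
  have b: "b \<in> H B Ii" unfolding b_def using comp_in[OF B P Io bd(2) retc] .
  have "b \<cdot> m = (ret \<cdot> c) \<cdot> (i1 \<cdot> m)" unfolding b_def using assoc[OF A B P Io m bd(2) retc] by simp
  also have "\<dots> = ret \<cdot> (j \<cdot> a)" using key assoc[OF A P E Io i1m c ret(1)] by simp
  also have "\<dots> = a" using assoc[OF A Io E Io a j ret(1)] ret(2) id_l[OF A Io a] by simp
  finally show ?thesis using b by blast
qed

end

context abcat begin

lemma images_exist:
  assumes "\<And>i. dG i \<in> H (G i) (G (i + 1))" "\<And>i. G i \<in> Ob C"
  shows "\<exists>Im k e. \<forall>i. Im i \<in> Ob C \<and> is_mono C (Im i) (G (i + 1)) (k i) \<and> is_epi C (G i) (Im i) (e i)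
     \<and> dG i = k i \<cdot> e i"
proof -
  have "\<forall>i. \<exists>t. fst t \<in> Ob C \<and> is_mono C (fst t) (G (i + 1)) (fst (snd t)) \<and> is_epi C (G i) (fst t) (snd (snd t))
     \<and> dG i = fst (snd t) \<cdot> snd (snd t)"
  proof
    fix i
    obtain J k e where "J \<in> Ob C \<and> is_mono C J (G (i + 1)) k \<and> is_epi C (G i) J e \<and> dG i = k \<cdot> e"
      using image_fact[OF assms(2) assms(2) assms(1)] by blast
    thus "\<exists>t. fst t \<in> Ob C \<and> is_mono C (fst t) (G (i + 1)) (fst (snd t)) \<and> is_epi C (G i) (fst t) (snd (snd t))
     \<and> dG i = fst (snd t) \<cdot> snd (snd t)" by (intro exI[of _ "(J, k, e)"]) simp
  qed
  then obtain F where F: "\<forall>i. fst (F i) \<in> Ob C \<and> is_mono C (fst (F i)) (G (i + 1)) (fst (snd (F i)))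
     \<and> is_epi C (G i) (fst (F i)) (snd (snd (F i))) \<and> dG i = fst (snd (F i)) \<cdot> snd (snd (F i))"
    by (metis choice)
  show ?thesis
    by (rule exI[of _ "\<lambda>i. fst (F i)"], rule exI[of _ "\<lambda>i. fst (snd (F i))"],
        rule exI[of _ "\<lambda>i. snd (snd (F i))"]) (use F in simp)
qed

end

context abcat begin

lemma lift_lemma:
  assumes res: "resolving C S"
    and cG: "is_complex C G dG" and ub: "upper_bounded C G" and acy: "acyclic_cx C G dG"
    and GS: "\<forall>i. G i \<in> S"
    and cI: "\<forall>i. I i \<in> Ob C"
    and inj: "\<forall>i. injective_in C S (I i)"
  shows "\<forall>j h. h \<in> H (G j) (I j) \<and> h \<cdot> dG (j - 1) = zz (G (j - 1)) (I j)
           \<longrightarrow> (\<exists>b\<in>H (G (j + 1)) (I j). b \<cdot> dG j = h)"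
proof -
  have Go: "\<And>i. G i \<in> Ob C" using cG unfolding is_complex_def by blast
  have dGi: "\<And>i. dG i \<in> H (G i) (G (i + 1))" using cG unfolding is_complex_def by blast
  have dGG: "\<And>i. dG (i + 1) \<cdot> dG i = zz (G i) (G (i + 2))" using cG unfolding is_complex_def by blast
  have dGm: "\<And>i. dG (i - 1) \<in> H (G (i - 1)) (G i)" using dGi[of "_ - 1"] by simp
  have dGGm: "\<And>i. dG i \<cdot> dG (i - 1) = zz (G (i - 1)) (G (i + 1))"
  proof -
    fix i :: int
    have "dG (i - 1 + 1) \<cdot> dG (i - 1) = zz (G (i - 1)) (G (i - 1 + 2))" using dGG .
    moreover have "i - 1 + 1 = i" "i - 1 + 2 = i + 1" by simp_all
    ultimately show "dG i \<cdot> dG (i - 1) = zz (G (i - 1)) (G (i + 1))" by simp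
  qed
  have ex: "\<And>i. is_exact C (G (i - 1)) (G i) (G (i + 1)) (dG (i - 1)) (dG i)"
    using acy unfolding acyclic_cx_def by blast
  have exD: "\<And>i K kk Q qq. is_kernel C (G i) (G (i + 1)) (dG i) K kk \<Longrightarrow>
      is_cokernel C (G (i - 1)) (G i) (dG (i - 1)) Q qq \<Longrightarrow> qq \<cdot> kk = zz K Q"
    using ex unfolding is_exact_def by blast
  obtain Im k e where IKE: "\<forall>i. Im i \<in> Ob C \<and> is_mono C (Im i) (G (i + 1)) (k i) \<and> is_epi C (G i) (Im i) (e i)
     \<and> dG i = k i \<cdot> e i"
    using images_exist[of dG G, OF dGi Go] by blast
  have Imo: "\<And>i. Im i \<in> Ob C" and km: "\<And>i. is_mono C (Im i) (G (i + 1)) (k i)"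
    and ee: "\<And>i. is_epi C (G i) (Im i) (e i)" and de: "\<And>i. dG i = k i \<cdot> e i" using IKE by blast+
  have ki: "\<And>i. k i \<in> H (Im i) (G (i + 1))" using km monoD by blast
  have ei: "\<And>i. e i \<in> H (G i) (Im i)" using ee epiD by blast
  have ecok: "\<And>i. is_cokernel C (G (i - 1)) (G i) (dG (i - 1)) (Im i) (e i)"
  proof -
    fix i :: int
    have "k i \<cdot> (e i \<cdot> dG (i - 1)) = dG i \<cdot> dG (i - 1)"
      using assoc[OF Go Go Imo Go dGm ei ki] de by simp
    also have "\<dots> = zz (G (i - 1)) (G (i + 1))" using dGGm .
    finally have z: "e i \<cdot> dG (i - 1) = zz (G (i - 1)) (Im i)"
      using mono_zero[OF Imo Go Go km comp_in[OF Go Go Imo dGm ei]] by blast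
    show "is_cokernel C (G (i - 1)) (G i) (dG (i - 1)) (Im i) (e i)"
    proof (rule coker_of_exact[OF Go Go Imo dGm ee z])
      fix K kk Q qq assume kk: "is_kernel C (G i) (Im i) (e i) K kk"
        and qq: "is_cokernel C (G (i - 1)) (G i) (dG (i - 1)) Q qq"
      have "is_kernel C (G i) (G (i + 1)) (dG i) K kk" using ker_comp_mono[OF Go Imo Go kk km] de by simp
      thus "qq \<cdot> kk = zz K Q" using exD qq by blast
    qed
  qed
  have ses: "\<And>i. short_exact C (Im i) (G (i + 1)) (Im (i + 1)) (k i) (e (i + 1))"
  proof -
    fix i :: int
    have g2: "G (i + 1 + 1) = G (i + 2)" by (simp add: add.assoc)
    have "k (i + 1) \<cdot> (e (i + 1) \<cdot> dG i) = dG (i + 1) \<cdot> dG i"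
      using assoc[OF Go Go Imo Go dGi ei ki] de by simp
    also have "\<dots> = zz (G i) (G (i + 1 + 1))" using dGG g2 by simp
    finally have z1: "e (i + 1) \<cdot> dG i = zz (G i) (Im (i + 1))"
      using mono_zero[OF Imo Go Go km comp_in[OF Go Go Imo dGi ei]] by blast
    have "(e (i + 1) \<cdot> k i) \<cdot> e i = zz (G i) (Im (i + 1))"
      using z1 de assoc[OF Go Imo Go Imo ei ki ei] by simp
    hence z: "e (i + 1) \<cdot> k i = zz (Im i) (Im (i + 1))"
      using epi_zero[OF Go Imo Imo ee comp_in[OF Imo Go Imo ki ei]] by blast
    have exi: "\<And>K kk Q qq. is_kernel C (G (i + 1)) (Im (i + 1)) (e (i + 1)) K kk \<Longrightarrow>
       is_cokernel C (Im i) (G (i + 1)) (k i) Q qq \<Longrightarrow> qq \<cdot> kk = zz K Q"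
    proof -
      fix K kk Q qq assume kk: "is_kernel C (G (i + 1)) (Im (i + 1)) (e (i + 1)) K kk"
        and qq: "is_cokernel C (Im i) (G (i + 1)) (k i) Q qq"
      have k1: "is_kernel C (G (i + 1)) (G (i + 1 + 1)) (dG (i + 1)) K kk"
        using ker_comp_mono[OF Go Imo Go kk km] de by simp
      have q1: "is_cokernel C (G (i + 1 - 1)) (G (i + 1)) (dG (i + 1 - 1)) Q qq"
        using coker_comp_epi[OF Go Imo Go qq ee] de by simp
      show "qq \<cdot> kk = zz K Q" using exD[OF k1 q1] .
    qed
    show "short_exact C (Im i) (G (i + 1)) (Im (i + 1)) (k i) (e (i + 1))"
      unfolding short_exact_def is_exact_def using Imo Go km ee ki ei z exi by blast
  qed
  have SO: "S \<subseteq> Ob C" and projS: "\<And>P. is_projective C P \<Longrightarrow> P \<in> S"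
    and kerS: "\<And>A B D f g. short_exact C A B D f g \<Longrightarrow> B \<in> S \<Longrightarrow> D \<in> S \<Longrightarrow> A \<in> S"
    using res unfolding resolving_def by blast+
  obtain n where n: "\<And>i. i \<ge> n \<Longrightarrow> is_zero_obj C (G i)" using ub unfolding upper_bounded_def by blast
  have top: "\<And>i. i \<ge> n - 1 \<Longrightarrow> Im i \<in> S"
  proof -
    fix i :: int assume "i \<ge> n - 1"
    hence "is_zero_obj C (G (i + 1))" using n by simp
    hence "is_zero_obj C (Im i)" using mono_to_zero[OF Imo _ km] by blast
    thus "Im i \<in> S" using zero_proj projS by blast
  qed
  have desc: "\<And>t::nat. Im (n - 1 - int t) \<in> S"
  proof -
    fix t :: nat show "Im (n - 1 - int t) \<in> S"
    proof (induction t)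
      case 0 then show ?case using top by simp
    next
      case (Suc t)
      define j where "j = n - 1 - int (Suc t)"
      have eq: "j + 1 = n - 1 - int t" unfolding j_def by simp
      have "short_exact C (Im j) (G (j + 1)) (Im (j + 1)) (k j) (e (j + 1))" by (rule ses)
      hence "short_exact C (Im j) (G (j + 1)) (Im (n - 1 - int t)) (k j) (e (j + 1))" by (simp only: eq)
      hence "Im j \<in> S" using kerS GS Suc.IH by blast
      thus ?case unfolding j_def .
    qed
  qed
  have ImS: "\<And>i. Im i \<in> S"
  proof -
    fix i :: int
    show "Im i \<in> S"
    proof (cases "i \<ge> n - 1")
      case True thus ?thesis using top by blast
    next
      case False
      hence "i = n - 1 - int (nat (n - 1 - i))" by simp
      thus ?thesis using desc by metis
    qed
  qed
  show ?thesis
  proof (intro allI impI)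
    fix j h assume hh: "h \<in> H (G j) (I j) \<and> h \<cdot> dG (j - 1) = zz (G (j - 1)) (I j)"
    have Io: "I j \<in> Ob C" using cI by blast
    obtain h' where h': "h' \<in> H (Im j) (I j)" "h' \<cdot> e j = h" using cokU[OF ecok Io] hh by blast
    have ext: "ext1_zero C (Im (j + 1)) (I j)" using inj ImS unfolding injective_in_def by blast
    obtain b where b: "b \<in> H (G (j + 1)) (I j)" "b \<cdot> k j = h'" using extend[OF ses Io ext h'(1)] by blast
    have "b \<cdot> dG j = (b \<cdot> k j) \<cdot> e j" using de assoc[OF Go Imo Go Io ei ki b(1)] by simp
    thus "\<exists>b\<in>H (G (j + 1)) (I j). b \<cdot> dG j = h" using b h' by auto
  qed
qed

end

context abcat begin

lemma main:
  assumes res: "resolving C S"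
    and cG: "is_complex C G dG" and ub: "upper_bounded C G" and acy: "acyclic_cx C G dG"
    and GS: "\<forall>i. G i \<in> S"
    and cI: "is_complex C I dI" and bI: "bounded_cx C I"
    and inj: "\<forall>i. injective_in C S (I i)"
  shows "homK_zero C G dG I dI"
  unfolding homK_zero_def
proof (intro allI impI)
  fix f assume fc: "chain_map C G dG I dI f"
  have Go: "\<And>i. G i \<in> Ob C" using cG unfolding is_complex_def by blast
  have dGi: "\<And>i. dG i \<in> H (G i) (G (i + 1))" using cG unfolding is_complex_def by blast
  have Io: "\<And>i. I i \<in> Ob C" using cI unfolding is_complex_def by blast
  have dIi: "\<And>i. dI i \<in> H (I i) (I (i + 1))" using cI unfolding is_complex_def by blast
  have dII: "\<And>i. dI (i + 1) \<cdot> dI i = zz (I i) (I (i + 2))" using cI unfolding is_complex_def by blast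
  have dIm: "\<And>i. dI (i - 1) \<in> H (I (i - 1)) (I i)" using dIi[of "_ - 1"] by simp
  have dGm: "\<And>i. dG (i - 1) \<in> H (G (i - 1)) (G i)" using dGi[of "_ - 1"] by simp
  have dIIm: "\<And>i. dI i \<cdot> dI (i - 1) = zz (I (i - 1)) (I (i + 1))"
  proof -
    fix i :: int
    have "dI (i - 1 + 1) \<cdot> dI (i - 1) = zz (I (i - 1)) (I (i - 1 + 2))" using dII .
    moreover have "i - 1 + 1 = i" "i - 1 + 2 = i + 1" by simp_all
    ultimately show "dI i \<cdot> dI (i - 1) = zz (I (i - 1)) (I (i + 1))" by simp
  qed
  have fi: "\<And>i. f i \<in> H (G i) (I i)" and fcm: "\<And>i. dI i \<cdot> f i = f (i + 1) \<cdot> dG i"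
    using fc unfolding chain_map_def by blast+
  have lift: "\<And>j h. h \<in> H (G j) (I j) \<Longrightarrow> h \<cdot> dG (j - 1) = zz (G (j - 1)) (I j)
           \<Longrightarrow> (\<exists>b\<in>H (G (j + 1)) (I j). b \<cdot> dG j = h)"
    using lift_lemma[OF res cG ub acy GS _ inj] Io by blast
  obtain m0 n0 where mn: "\<And>i. i \<le> m0 \<or> i \<ge> n0 \<Longrightarrow> is_zero_obj C (I i)"
    using bI unfolding bounded_cx_def by blast
  have Iz: "\<And>i. i \<le> m0 \<Longrightarrow> is_zero_obj C (I i)" using mn by blast
  define J :: "nat \<Rightarrow> int" where "J t = m0 + 1 + int t" for t
  have JS: "\<And>t. J (Suc t) = J t + 1" unfolding J_def by simp
  have JSm: "\<And>t. J (Suc t) - 1 = J t" unfolding J_def by simp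
  define P where "P t x y \<longleftrightarrow> y \<in> H (G (J t + 1)) (I (J t)) \<and>
      y \<cdot> dG (J t) = f (J t) \<oplus> \<ominus> (dI (J t - 1) \<cdot> x)" for t x y
  define \<sigma> where "\<sigma> = rec_nat (zz (G (m0 + 1)) (I m0)) (\<lambda>t x. SOME y. P t x y)"
  have \<sigma>0: "\<sigma> 0 = zz (G (m0 + 1)) (I m0)" unfolding \<sigma>_def by simp
  have \<sigma>S: "\<And>t. \<sigma> (Suc t) = (SOME y. P t (\<sigma> t) y)" unfolding \<sigma>_def by simp
  define Inv where "Inv t \<longleftrightarrow> \<sigma> t \<in> H (G (J t)) (I (J t - 1)) \<and>
      (f (J t) \<oplus> \<ominus> (dI (J t - 1) \<cdot> \<sigma> t)) \<cdot> dG (J t - 1) = zz (G (J t - 1)) (I (J t))" for t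
  have step: "\<And>t. Inv t \<Longrightarrow> P t (\<sigma> t) (\<sigma> (Suc t))"
  proof -
    fix t assume iv: "Inv t"
    have s: "\<sigma> t \<in> H (G (J t)) (I (J t - 1))" using iv unfolding Inv_def by blast
    have hin: "f (J t) \<oplus> \<ominus> (dI (J t - 1) \<cdot> \<sigma> t) \<in> H (G (J t)) (I (J t))"
      using add_in[OF Go Io fi ngt_in[OF Go Io comp_in[OF Go Io Io s dIm]]] .
    obtain b where "b \<in> H (G (J t + 1)) (I (J t))" "b \<cdot> dG (J t) = f (J t) \<oplus> \<ominus> (dI (J t - 1) \<cdot> \<sigma> t)"
      using lift[OF hin] iv unfolding Inv_def by blast
    hence "\<exists>y. P t (\<sigma> t) y" unfolding P_def by blast
    thus "P t (\<sigma> t) (\<sigma> (Suc t))" unfolding \<sigma>S by (rule someI_ex)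
  qed
  have inv: "\<And>t. Inv t"
  proof -
    fix t show "Inv t"
    proof (induction t)
      case 0
      have J0: "J 0 = m0 + 1" "J 0 - 1 = m0" unfolding J_def by simp_all
      have z: "is_zero_obj C (I m0)" using Iz by simp
      have s0: "\<sigma> 0 \<in> H (G (m0 + 1)) (I m0)" using \<sigma>0 zro_in[OF Go Io] by simp
      have "dI m0 \<cdot> \<sigma> 0 = zz (G (m0 + 1)) (I (m0 + 1))" using \<sigma>0 comp_zro_r[OF Go Io Io dIi] by simp
      hence "f (m0 + 1) \<oplus> \<ominus> (dI m0 \<cdot> \<sigma> 0) = f (m0 + 1)"
        using ngt_zro[OF Go Io] add_zro[OF Go Io fi] by simp
      moreover have "f (m0 + 1) \<cdot> dG m0 = zz (G m0) (I (m0 + 1))"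
        using fcm[of m0] zero_to[OF z Go fi] comp_zro_r[OF Go Io Io dIi] by simp
      ultimately show ?case unfolding Inv_def J0 using s0 by simp
    next
      case (Suc t)
      have p: "P t (\<sigma> t) (\<sigma> (Suc t))" using step[OF Suc.IH] .
      define j where "j = J t"
      have s: "\<sigma> t \<in> H (G j) (I (j - 1))" using Suc.IH unfolding Inv_def j_def by blast
      have s': "\<sigma> (Suc t) \<in> H (G (j + 1)) (I j)" and eqs: "\<sigma> (Suc t) \<cdot> dG j = f j \<oplus> \<ominus> (dI (j - 1) \<cdot> \<sigma> t)"
        using p unfolding P_def j_def by blast+
      define X where "X = f (j + 1) \<cdot> dG j"
      have Xi: "X \<in> H (G j) (I (j + 1))" unfolding X_def using comp_in[OF Go Go Io dGi fi] .
      have Xe: "dI j \<cdot> f j = X" unfolding X_def using fcm by simp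
      have ds: "dI (j - 1) \<cdot> \<sigma> t \<in> H (G j) (I j)" using comp_in[OF Go Io Io s dIm] .
      have "dI j \<cdot> (f j \<oplus> \<ominus> (dI (j - 1) \<cdot> \<sigma> t)) = (dI j \<cdot> f j) \<oplus> (dI j \<cdot> \<ominus> (dI (j - 1) \<cdot> \<sigma> t))"
        using comp_add_r[OF Go Io Io fi ngt_in[OF Go Io ds] dIi] .
      also have "\<dots> = X \<oplus> \<ominus> ((dI j \<cdot> dI (j - 1)) \<cdot> \<sigma> t)"
        using Xe comp_ngt_r[OF Go Io Io ds dIi] assoc[OF Go Io Io Io s dIm dIi] by simp
      also have "\<dots> = X" using dIIm comp_zro_l[OF Go Io Io s] ngt_zro[OF Go Io] add_zro[OF Go Io Xi] by simp
      finally have dh: "dI j \<cdot> (\<sigma> (Suc t) \<cdot> dG j) = X" using eqs by simp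
      have dis: "dI j \<cdot> \<sigma> (Suc t) \<in> H (G (j + 1)) (I (j + 1))" using comp_in[OF Go Io Io s' dIi] .
      have "(f (j + 1) \<oplus> \<ominus> (dI j \<cdot> \<sigma> (Suc t))) \<cdot> dG j = X \<oplus> ((\<ominus> (dI j \<cdot> \<sigma> (Suc t))) \<cdot> dG j)"
        unfolding X_def using comp_add_l[OF Go Go Io dGi fi ngt_in[OF Go Io dis]] .
      also have "\<dots> = X \<oplus> \<ominus> (dI j \<cdot> (\<sigma> (Suc t) \<cdot> dG j))"
        using comp_ngt_l[OF Go Go Io dGi dis] assoc[OF Go Go Io Io dGi s' dIi] by simp
      also have "\<dots> = zz (G j) (I (j + 1))" using dh add_ngt[OF Go Io Xi] by simp
      finally have "(f (j + 1) \<oplus> \<ominus> (dI j \<cdot> \<sigma> (Suc t))) \<cdot> dG j = zz (G j) (I (j + 1))" .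
      thus ?case unfolding Inv_def JS JSm using s' unfolding j_def by simp
    qed
  qed
  define s where "s i = (if i \<le> m0 then zz (G i) (I (i - 1)) else \<sigma> (nat (i - m0 - 1)))" for i
  show "null_homotopic C G dG I dI f"
    unfolding null_homotopic_def
  proof (intro exI[of _ s] allI conjI)
    fix i :: int
    show "s i \<in> H (G i) (I (i - 1))"
    proof (cases "i \<le> m0")
      case True thus ?thesis unfolding s_def using zro_in[OF Go Io] by simp
    next
      case False
      hence "J (nat (i - m0 - 1)) = i" unfolding J_def by simp
      thus ?thesis using inv[of "nat (i - m0 - 1)"] False unfolding Inv_def s_def by simp
    qed
    show "f i = (dI (i - 1) \<cdot> s i) \<oplus> (s (i + 1) \<cdot> dG i)"
    proof (cases "i \<le> m0")
      case True
      have si: "s i = zz (G i) (I (i - 1))" unfolding s_def using True by simp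
      have si1: "s (i + 1) = zz (G (i + 1)) (I i)"
      proof (cases "i + 1 \<le> m0")
        case True thus ?thesis unfolding s_def by simp
      next
        case False
        hence "i = m0" using \<open>i \<le> m0\<close> by simp
        thus ?thesis unfolding s_def using \<sigma>0 by simp
      qed
      have "dI (i - 1) \<cdot> s i = zz (G i) (I i)" using si comp_zro_r[OF Go Io Io dIm] by simp
      moreover have "s (i + 1) \<cdot> dG i = zz (G i) (I i)" using si1 comp_zro_l[OF Go Go Io dGi] by simp
      moreover have "f i = zz (G i) (I i)" using zero_to[OF Iz[OF True] Go fi] .
      ultimately show ?thesis using add_zro[OF Go Io zro_in[OF Go Io]] by simp
    next
      case False
      define t where "t = nat (i - m0 - 1)"
      have Jt: "J t = i" unfolding J_def t_def using False by simp
      have si: "s i = \<sigma> t" unfolding s_def t_def using False by simp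
      have si1: "s (i + 1) = \<sigma> (Suc t)" unfolding s_def t_def using False by (simp add: Suc_nat_eq_nat_zadd1)
      have p: "P t (\<sigma> t) (\<sigma> (Suc t))" using step[OF inv] .
      hence eq: "\<sigma> (Suc t) \<cdot> dG i = f i \<oplus> \<ominus> (dI (i - 1) \<cdot> \<sigma> t)" unfolding P_def Jt by blast
      have st: "\<sigma> t \<in> H (G i) (I (i - 1))" using inv[of t] unfolding Inv_def Jt by blast
      have "(dI (i - 1) \<cdot> \<sigma> t) \<oplus> (f i \<oplus> \<ominus> (dI (i - 1) \<cdot> \<sigma> t)) = f i"
        using add_sub_cancel[OF Go Io comp_in[OF Go Io Io st dIm] fi] .
      thus ?thesis using si si1 eq by simp
    qed
  qed
qed

end

theorem lemma6p4:
  fixes C :: "('o, 'm) cat" and S :: "'o set"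
    and G :: "int \<Rightarrow> 'o" and dG :: "int \<Rightarrow> 'm"
    and I :: "int \<Rightarrow> 'o" and dI :: "int \<Rightarrow> 'm"
  assumes "is_abelian C" and "enough_projectives C" and "resolving C S"
    and "is_complex C G dG" and "upper_bounded C G" and "acyclic_cx C G dG"
    and "\<forall>i. G i \<in> S"
    and "is_complex C I dI" and "bounded_cx C I"
    and "\<forall>i. injective_in C S (I i)"
  shows "homK_zero C G dG I dI"
proof -
  interpret abcat C by unfold_locales (rule assms(1))
  show ?thesis using main[OF assms(3-10)] .
qed

end
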